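(* For $a>0$ and $y>1$ let $\bar F(y,a)=y^{\sqrt a}\exp\!\big(-a(y^{1/\sqrt a}-1)\big)$. Then for every fixed $y>1$, the map $a\mapsto \bar F(y,a)$ is strictly increasing on $(0,\infty)$. Equivalently, if $Y_a=(1+X_a)^{\sqrt a}$ where $X_a$ has density $a t\,e^{-a t}(1+t)^{a-1}$ on $t>0$, then the family $\{Y_a\}_{a>0}$ is strictly increasing in the usual stochastic order: $\Pr\{Y_a>y\}<\Pr\{Y_b>y\}$ for all $y>1$ whenever $0<a<b$. *)

theory Defs
  imports Complex_Main
begin

definition Fbar :: "real \<Rightarrow> real \<Rightarrow> real" where
  "Fbar y a = y powr (sqrt a) * exp (- a * (y powr (1 / sqrt a) - 1))"

end

theory Submission
  imports Defs
begin

lemma kp_neg: fixes u :: real assumes "u > 0" shows "(1-u)*exp u - 1 < 0"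
proof -
  have "1 - u < exp (-u)" using exp_minus_greater[of u] assms by simp
  then have "(1-u)*exp u < exp (-u) * exp u" by (simp add: mult_strict_right_mono)
  also have "\<dots> = 1" by (simp add: exp_add[symmetric])
  finally show ?thesis by simp
qed

lemma k_neg: fixes u :: real assumes "u > 0" shows "(2-u)*exp u - u - 2 < 0"
proof -
  let ?k = "\<lambda>u::real. (2-u)*exp u - u - 2"
  have "?k 0 > ?k u"
  proof (rule DERIV_neg_imp_decreasing_open[OF assms])
    fix x :: real assume x: "0 < x" "x < u"
    have "DERIV ?k x :> ((-1)*exp x + (2-x)*exp x - 1)"
      by (auto intro!: derivative_eq_intros)
    moreover have "(-1)*exp x + (2-x)*exp x - 1 = (1-x)*exp x - 1" by algebra
    ultimately show "\<exists>y. DERIV ?k x :> y \<and> y < 0" using kp_neg[OF x(1)] by auto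
  next
    show "continuous_on {0..u} ?k" by (intro continuous_intros)
  qed
  then show ?thesis by simp
qed

definition hh :: "real \<Rightarrow> real" where "hh u = (u - exp u + 1) / u^2"

lemma hh_dec: fixes u v :: real assumes "0 < u" "u < v" shows "hh v < hh u"
proof -
  have "hh u > hh v" unfolding hh_def
  proof (rule DERIV_neg_imp_decreasing_open[OF assms(2)])
    fix x :: real assume x: "u < x" "x < v"
    then have x0: "x > 0" using assms by simp
    have "DERIV (\<lambda>u. (u - exp u + 1) / u^2) x :>
       ((1 - exp x) * x^2 - (x - exp x + 1) * (2 * x)) / (x^2)^2"
      using x0 by (auto intro!: derivative_eq_intros simp: power2_eq_square)
    moreover have "((1 - exp x) * x^2 - (x - exp x + 1) * (2 * x)) / (x^2)^2
        = ((2-x)*exp x - x - 2) / x^3"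
      using x0 by (simp add: field_simps power2_eq_square power3_eq_cube)
    moreover have "((2-x)*exp x - x - 2) / x^3 < 0"
      using k_neg[OF x0] x0 by (simp add: divide_neg_pos)
    ultimately show "\<exists>y. DERIV (\<lambda>u. (u - exp u + 1) / u^2) x :> y \<and> y < 0" by auto
  next
    show "continuous_on {u..v} (\<lambda>u. (u - exp u + 1) / u^2)"
      using assms by (intro continuous_intros) auto
  qed
  then show ?thesis by simp
qed

lemma Fbar_eq: fixes y a :: real assumes "y > 1" "a > 0"
  shows "Fbar y a = exp ((ln y)^2 * hh (ln y / sqrt a))"
proof -
  let ?L = "ln y" and ?s = "sqrt a"
  have L: "?L > 0" using assms by simp
  have s: "?s > 0" using assms by simp
  have "Fbar y a = exp (?s * ?L) * exp (- (?s^2) * (exp (?L / ?s) - 1))"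
    unfolding Fbar_def using assms by (simp add: powr_def)
  also have "\<dots> = exp (?s * ?L - ?s^2 * (exp (?L / ?s) - 1))"
    by (simp add: exp_add[symmetric])
  also have "?s * ?L - ?s^2 * (exp (?L / ?s) - 1) = ?L^2 * hh (?L / ?s)"
    unfolding hh_def using L s by (simp add: field_simps power2_eq_square)
  finally show ?thesis .
qed

theorem mainTheorem5:
  fixes y :: real
  assumes "y > 1"
  shows "strict_mono_on {0<..} (\<lambda>a. Fbar y a)"
proof (rule strict_mono_onI)
  fix a b :: real assume a: "a \<in> {0<..}" and b: "b \<in> {0<..}" and ab: "a < b"
  have L: "ln y > 0" using assms by simp
  have sa: "sqrt a > 0" using a by simp
  have sab: "sqrt a < sqrt b" using ab by simp
  have "ln y / sqrt b < ln y / sqrt a" using L sa sab by (simp add: divide_strict_left_mono)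
  moreover have "ln y / sqrt b > 0" using L b by simp
  ultimately have "hh (ln y / sqrt a) < hh (ln y / sqrt b)" using hh_dec by blast
  then have "(ln y)^2 * hh (ln y / sqrt a) < (ln y)^2 * hh (ln y / sqrt b)"
    using L by simp
  then show "Fbar y a < Fbar y b" using Fbar_eq[OF assms] a b by simp
qed

end
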